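(* For every class of closed formulas $\mathbb{P}$ and every $n$, every safety problem provable in $\mathbf{FI}^{\mathbb{P}}_n$ is also provable in $\mathbf{F}^{\wedge_n\mathbb{P}}$. Moreover, for every $n>0$ there exist a class of predicates $\mathbb{P}$ and a safety problem $\Pi$ such that $\Pi$ is provable in $\mathbf{FI}^{\mathbb{P}}_n$ but not provable in $\mathbf{FI}^{\mathbb{P}}_{n-1}$.
   Context: A first-order vocabulary $\Sigma$ consists of constant, function and relation symbols; $\Sigma'=\{a' : a\in\Sigma\}$ is a disjoint copy, and for a formula $\varphi$ over $\Sigma$, $\varphi'$ denotes $\varphi$ with every symbol replaced by its primed copy. A safety problem is a triple $(\iota,\tau,\beta)$, where $\iota,\beta$ are closed formulas over $\Sigma$ and $\tau$ is a closed formula over $\Sigma\uplus\Sigma'$. $A\Rightarrow B$ means the implication $A\to B$ is valid. Proofs: a proof of $\Pi$ in a system is a finite tree whose nodes are safety problems, whose root is $\Pi$, and in which each node together with its children is an instance of one of the system's inference rules, with side conditions valid. Rules ($\varphi$ ranges over closed formulas over $\Sigma$): (Ind): no premises; conclusion $(\iota,\tau,\neg\varphi)$; side conditions $\iota\Rightarrow\varphi$ and $\varphi\wedge\tau\Rightarrow\varphi'$. (Cons): premise $(\iota,\tau,\neg\varphi)$; conclusion $(\iota,\tau,\beta)$; side condition $\varphi\Rightarrow\neg\beta$. (Inc): premises $(\iota,\tau,\neg\varphi)$ and $(\iota\wedge\varphi,\ \tau\wedge\varphi\wedge\varphi',\ \beta\wedge\varphi)$; conclusion $(\iota,\tau,\beta)$.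 $\mathbf{F}$ consists of (Ind) and (Cons); $\mathbf{FI}$ consists of (Ind), (Cons), (Inc). For a class of closed formulas $\mathbb{P}$, $\mathbf{F}^{\mathbb{P}}$ (resp. $\mathbf{FI}^{\mathbb{P}}$) restricts applications of (Ind) to $\varphi\in\mathbb{P}$, and $\mathbf{FI}^{\mathbb{P}}_n$ further restricts proofs to use at most $n$ applications of (Ind). $\wedge_n\mathbb{P}$ denotes the class of conjunctions of at most $n$ predicates from $\mathbb{P}$. *)

theory Defs
  imports Main
begin

datatype 'f trm = Var nat | Fn 'f "'f trm list"

datatype ('f, 'r) fm =
    Bot
  | Top
  | Atom 'r "'f trm list"
  | Eq "'f trm" "'f trm"
  | Neg "('f, 'r) fm"
  | Conj "('f, 'r) fm" "('f, 'r) fm"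
  | Disj "('f, 'r) fm" "('f, 'r) fm"
  | Imp "('f, 'r) fm" "('f, 'r) fm"
  | All nat "('f, 'r) fm"
  | Ex nat "('f, 'r) fm"

fun fvt :: "'f trm \<Rightarrow> nat set" where
  "fvt (Var x) = {x}"
| "fvt (Fn f ts) = (\<Union>t\<in>set ts. fvt t)"

fun fv :: "('f, 'r) fm \<Rightarrow> nat set" where
  "fv Bot = {}"
| "fv Top = {}"
| "fv (Atom r ts) = (\<Union>t\<in>set ts. fvt t)"
| "fv (Eq s t) = fvt s \<union> fvt t"
| "fv (Neg a) = fv a"
| "fv (Conj a b) = fv a \<union> fv b"
| "fv (Disj a b) = fv a \<union> fv b"
| "fv (Imp a b) = fv a \<union> fv b"
| "fv (All x a) = fv a - {x}"
| "fv (Ex x a) = fv a - {x}"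

definition closed :: "('f, 'r) fm \<Rightarrow> bool" where
  "closed a \<longleftrightarrow> fv a = {}"

record ('f, 'r) vocab =
  fsyms :: "'f set"
  rsyms :: "'r set"
  farity :: "'f \<Rightarrow> nat"
  rarity :: "'r \<Rightarrow> nat"

fun wft :: "('f, 'r) vocab \<Rightarrow> 'f trm \<Rightarrow> bool" where
  "wft V (Var x) = True"
| "wft V (Fn f ts) = (f \<in> fsyms V \<and> length ts = farity V f \<and> (\<forall>t\<in>set ts. wft V t))"

fun wf :: "('f, 'r) vocab \<Rightarrow> ('f, 'r) fm \<Rightarrow> bool" where
  "wf V Bot = True"
| "wf V Top = True"
| "wf V (Atom r ts) = (r \<in> rsyms V \<and> length ts = rarity V r \<and> (\<forall>t\<in>set ts. wft V t))"
| "wf V (Eq s t) = (wft V s \<and> wft V t)"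
| "wf V (Neg a) = wf V a"
| "wf V (Conj a b) = (wf V a \<and> wf V b)"
| "wf V (Disj a b) = (wf V a \<and> wf V b)"
| "wf V (Imp a b) = (wf V a \<and> wf V b)"
| "wf V (All x a) = wf V a"
| "wf V (Ex x a) = wf V a"

definition cfm :: "('f, 'r) vocab \<Rightarrow> ('f, 'r) fm set" where
  "cfm V = {a. closed a \<and> wf V a}"

text \<open>The vocabulary \<Sigma> \<uplus> \<Sigma>': unprimed symbols are tagged Inl, primed ones Inr.\<close>
definition dvocab :: "('f, 'r) vocab \<Rightarrow> ('f + 'f, 'r + 'r) vocab" where
  "dvocab V = \<lparr> fsyms = Inl ` fsyms V \<union> Inr ` fsyms V,
               rsyms = Inl ` rsyms V \<union> Inr ` rsyms V,
               farity = case_sum (farity V) (farity V),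
               rarity = case_sum (rarity V) (rarity V) \<rparr>"

definition unp :: "('f, 'r) fm \<Rightarrow> ('f + 'f, 'r + 'r) fm" where
  "unp a = map_fm Inl Inl a"

definition prime :: "('f, 'r) fm \<Rightarrow> ('f + 'f, 'r + 'r) fm" where
  "prime a = map_fm Inr Inr a"

text \<open>Structures have a nonempty domain D (a set of naturals); symbols are
  interpreted on argument lists.  Restricting to countable domains does not
  change validity of single first-order sentences (downward Loewenheim-Skolem).\<close>

fun evalt :: "('f \<Rightarrow> nat list \<Rightarrow> nat) \<Rightarrow> (nat \<Rightarrow> nat) \<Rightarrow> 'f trm \<Rightarrow> nat" where
  "evalt I e (Var x) = e x"
| "evalt I e (Fn f ts) = I f (map (evalt I e) ts)"

fun holds :: "nat set \<Rightarrow> ('f \<Rightarrow> nat list \<Rightarrow> nat) \<Rightarrow> ('r \<Rightarrow> nat list \<Rightarrow> bool)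
    \<Rightarrow> (nat \<Rightarrow> nat) \<Rightarrow> ('f, 'r) fm \<Rightarrow> bool" where
  "holds D I R e Bot = False"
| "holds D I R e Top = True"
| "holds D I R e (Atom r ts) = R r (map (evalt I e) ts)"
| "holds D I R e (Eq s t) = (evalt I e s = evalt I e t)"
| "holds D I R e (Neg a) = (\<not> holds D I R e a)"
| "holds D I R e (Conj a b) = (holds D I R e a \<and> holds D I R e b)"
| "holds D I R e (Disj a b) = (holds D I R e a \<or> holds D I R e b)"
| "holds D I R e (Imp a b) = (holds D I R e a \<longrightarrow> holds D I R e b)"
| "holds D I R e (All x a) = (\<forall>d\<in>D. holds D I R (e(x := d)) a)"
| "holds D I R e (Ex x a) = (\<exists>d\<in>D. holds D I R (e(x := d)) a)"

definition is_structure :: "nat set \<Rightarrow> ('f \<Rightarrow> nat list \<Rightarrow> nat) \<Rightarrow> bool" where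
  "is_structure D I \<longleftrightarrow> D \<noteq> {} \<and> (\<forall>f xs. set xs \<subseteq> D \<longrightarrow> I f xs \<in> D)"

definition valid :: "('f, 'r) fm \<Rightarrow> bool" where
  "valid a \<longleftrightarrow> (\<forall>D I R e. is_structure D I \<longrightarrow> range e \<subseteq> D \<longrightarrow> holds D I R e a)"

definition entails :: "('f, 'r) fm \<Rightarrow> ('f, 'r) fm \<Rightarrow> bool" where
  "entails a b \<longleftrightarrow> valid (Imp a b)"

type_synonym ('f, 'r) sprob = "('f, 'r) fm \<times> ('f + 'f, 'r + 'r) fm \<times> ('f, 'r) fm"

definition safety_problem :: "('f, 'r) vocab \<Rightarrow> ('f, 'r) sprob \<Rightarrow> bool" where
  "safety_problem V \<Pi> = (case \<Pi> of (\<iota>, \<tau>, \<beta>) \<Rightarrow>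
      \<iota> \<in> cfm V \<and> \<tau> \<in> cfm (dvocab V) \<and> \<beta> \<in> cfm V)"

text \<open>derives V inc P \<Pi> k: there is a proof tree of \<Pi> (all nodes are safety
  problems over V) in the system with rules (Ind) restricted to \<phi> \<in> P, (Cons),
  and, if inc is true, (Inc); k is the number of applications of (Ind) in the tree.\<close>

inductive derives :: "('f, 'r) vocab \<Rightarrow> bool \<Rightarrow> ('f, 'r) fm set \<Rightarrow> ('f, 'r) sprob \<Rightarrow> nat \<Rightarrow> bool"
  for V :: "('f, 'r) vocab" and inc :: bool and P :: "('f, 'r) fm set" where
  Ind: "\<lbrakk> safety_problem V (\<iota>, \<tau>, Neg \<phi>); \<phi> \<in> cfm V; \<phi> \<in> P;
          entails \<iota> \<phi>; entails (Conj (unp \<phi>) \<tau>) (prime \<phi>) \<rbrakk>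
        \<Longrightarrow> derives V inc P (\<iota>, \<tau>, Neg \<phi>) 1"
| Cons: "\<lbrakk> safety_problem V (\<iota>, \<tau>, \<beta>); \<phi> \<in> cfm V;
           derives V inc P (\<iota>, \<tau>, Neg \<phi>) k; entails \<phi> (Neg \<beta>) \<rbrakk>
        \<Longrightarrow> derives V inc P (\<iota>, \<tau>, \<beta>) k"
| Inc: "\<lbrakk> inc; safety_problem V (\<iota>, \<tau>, \<beta>); \<phi> \<in> cfm V;
          derives V inc P (\<iota>, \<tau>, Neg \<phi>) k1;
          derives V inc P (Conj \<iota> \<phi>, Conj \<tau> (Conj (unp \<phi>) (prime \<phi>)), Conj \<beta> \<phi>) k2 \<rbrakk>
        \<Longrightarrow> derives V inc P (\<iota>, \<tau>, \<beta>) (k1 + k2)"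

definition provable_F :: "('f, 'r) vocab \<Rightarrow> ('f, 'r) fm set \<Rightarrow> ('f, 'r) sprob \<Rightarrow> bool" where
  "provable_F V P \<Pi> \<longleftrightarrow> (\<exists>k. derives V False P \<Pi> k)"

definition provable_FI_n :: "('f, 'r) vocab \<Rightarrow> ('f, 'r) fm set \<Rightarrow> nat \<Rightarrow> ('f, 'r) sprob \<Rightarrow> bool" where
  "provable_FI_n V P n \<Pi> \<longleftrightarrow> (\<exists>k\<le>n. derives V True P \<Pi> k)"

fun conjs :: "('f, 'r) fm list \<Rightarrow> ('f, 'r) fm" where
  "conjs [] = Top"
| "conjs [a] = a"
| "conjs (a # as) = Conj a (conjs as)"

definition conj_class :: "nat \<Rightarrow> ('f, 'r) fm set \<Rightarrow> ('f, 'r) fm set" where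
  "conj_class n P = {conjs xs | xs. xs \<noteq> [] \<and> length xs \<le> n \<and> set xs \<subseteq> P}"

end

theory Submission
  imports Defs
begin

lemma evalt_map: "evalt I e (map_trm g t) = evalt (\<lambda>f. I (g f)) e t"
  by (induction t) (auto cong: map_cong)

lemma holds_map: "holds D I R e (map_fm g h a) = holds D (\<lambda>f. I (g f)) (\<lambda>r. R (h r)) e a"
  by (induction a arbitrary: e) (auto simp: evalt_map comp_def)

lemma fvt_map: "fvt (map_trm g t) = fvt t"
  by (induction t) auto

lemma fv_map: "fv (map_fm g h a) = fv a"
  by (induction a) (auto simp: fvt_map)

lemma dv_simps[simp]: "fsyms (dvocab V) = Inl ` fsyms V \<union> Inr ` fsyms V"
  "rsyms (dvocab V) = Inl ` rsyms V \<union> Inr ` rsyms V"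
  "farity (dvocab V) = case_sum (farity V) (farity V)"
  "rarity (dvocab V) = case_sum (rarity V) (rarity V)"
  by (simp_all add: dvocab_def)

lemma wft_Inl: "wft (dvocab V) (map_trm Inl t) = wft V t"
  by (induction t) auto

lemma wft_Inr: "wft (dvocab V) (map_trm Inr t) = wft V t"
  by (induction t) auto

lemma wf_Inl: "wf (dvocab V) (map_fm Inl Inl a) = wf V a"
  by (induction a) (auto simp: wft_Inl)

lemma wf_Inr: "wf (dvocab V) (map_fm Inr Inr a) = wf V a"
  by (induction a) (auto simp: wft_Inr)

lemma unp_cfm: "a \<in> cfm V \<Longrightarrow> unp a \<in> cfm (dvocab V)"
  by (simp add: cfm_def closed_def unp_def fv_map wf_Inl)

lemma prime_cfm: "a \<in> cfm V \<Longrightarrow> prime a \<in> cfm (dvocab V)"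
  by (simp add: cfm_def closed_def prime_def fv_map wf_Inr)

lemma holds_conjs: "xs \<noteq> [] \<Longrightarrow> holds D I R e (conjs xs) = (\<forall>x\<in>set xs. holds D I R e x)"
  by (induction xs rule: conjs.induct) auto

lemma conjs_cfm: "xs \<noteq> [] \<Longrightarrow> set xs \<subseteq> cfm V \<Longrightarrow> conjs xs \<in> cfm V"
  by (induction xs rule: conjs.induct) (auto simp: cfm_def closed_def)

lemma struct_Inl: "is_structure D I \<Longrightarrow> is_structure D (\<lambda>f. I (Inl f))"
  by (simp add: is_structure_def)

lemma struct_Inr: "is_structure D I \<Longrightarrow> is_structure D (\<lambda>f. I (Inr f))"
  by (simp add: is_structure_def)

lemma entails_iff: "entails a b \<longleftrightarrow> (\<forall>D I R e. is_structure D I \<longrightarrow> range e \<subseteq> D \<longrightarrow> holds D I R e a \<longrightarrow> holds D I R e b)"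
  by (auto simp: entails_def valid_def)

lemma holds_unp: "holds D I R e (unp a) = holds D (\<lambda>f. I (Inl f)) (\<lambda>r. R (Inl r)) e a"
  by (simp add: unp_def holds_map)

lemma holds_prime: "holds D I R e (prime a) = holds D (\<lambda>f. I (Inr f)) (\<lambda>r. R (Inr r)) e a"
  by (simp add: prime_def holds_map)

lemma inv:
  assumes "derives V inc P \<Pi> k"
  shows "\<exists>xs. xs \<noteq> [] \<and> length xs \<le> k \<and> set xs \<subseteq> P \<and> entails (fst \<Pi>) (conjs xs)
     \<and> entails (Conj (unp (conjs xs)) (fst (snd \<Pi>))) (prime (conjs xs))
     \<and> entails (conjs xs) (Neg (snd (snd \<Pi>)))"
  using assms
proof (induction rule: derives.induct)
  case (Ind \<iota> \<tau> \<phi>)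
  then show ?case by (intro exI[of _ "[\<phi>]"]) (auto simp: entails_iff)
next
  case (Cons \<iota> \<tau> \<beta> \<phi> k)
  then obtain xs where "xs \<noteq> [] \<and> length xs \<le> k \<and> set xs \<subseteq> P \<and> entails \<iota> (conjs xs)
     \<and> entails (Conj (unp (conjs xs)) \<tau>) (prime (conjs xs))
     \<and> entails (conjs xs) (Neg (Neg \<phi>))" by auto
  with Cons show ?case by (intro exI[of _ xs]) (auto simp: entails_iff)
next
  case (Inc \<iota> \<tau> \<beta> \<phi> k1 k2)
  from Inc.IH(1) obtain a where a: "a \<noteq> []" "length a \<le> k1" "set a \<subseteq> P" "entails \<iota> (conjs a)"
     "entails (Conj (unp (conjs a)) \<tau>) (prime (conjs a))"
     "entails (conjs a) (Neg (Neg \<phi>))" by auto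
  from Inc.IH(2) obtain b where b: "b \<noteq> []" "length b \<le> k2" "set b \<subseteq> P" "entails (Conj \<iota> \<phi>) (conjs b)"
     "entails (Conj (unp (conjs b)) (Conj \<tau> (Conj (unp \<phi>) (prime \<phi>)))) (prime (conjs b))"
     "entails (conjs b) (Neg (Conj \<beta> \<phi>))" by auto
  have c: "holds D I R e (conjs (a @ b)) = (holds D I R e (conjs a) \<and> holds D I R e (conjs b))"
    for D e I R
    using a(1) b(1) by (auto simp: holds_conjs)
  have 1: "entails \<iota> (conjs (a @ b))"
    using a(4,6) b(4) unfolding entails_iff c by auto
  have 2: "entails (Conj (unp (conjs (a @ b))) \<tau>) (prime (conjs (a @ b)))"
    unfolding entails_iff
  proof (intro allI impI)
    fix D I R e
    assume s: "is_structure D I" and r: "range e \<subseteq> D" and h: "holds D I R e (Conj (unp (conjs (a @ b))) \<tau>)"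
    have sl: "is_structure D (\<lambda>f. I (Inl f))" and sr: "is_structure D (\<lambda>f. I (Inr f))"
      using s by (auto simp: struct_Inl struct_Inr)
    have ha: "holds D (\<lambda>f. I (Inl f)) (\<lambda>r. R (Inl r)) e (conjs a)"
      and hb: "holds D (\<lambda>f. I (Inl f)) (\<lambda>r. R (Inl r)) e (conjs b)"
      and ht: "holds D I R e \<tau>" using h by (auto simp: holds_unp c)
    have pa: "holds D I R e (prime (conjs a))"
      using a(5) s r ha ht unfolding entails_iff by (auto simp: holds_unp)
    have "holds D (\<lambda>f. I (Inl f)) (\<lambda>r. R (Inl r)) e \<phi>"
      using a(6) sl r ha unfolding entails_iff by force
    moreover have "holds D (\<lambda>f. I (Inr f)) (\<lambda>r. R (Inr r)) e \<phi>"
      using a(6) sr r pa unfolding entails_iff holds_prime by force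
    ultimately have pb: "holds D I R e (prime (conjs b))"
      using b(5) s r hb ht unfolding entails_iff by (auto simp: holds_unp holds_prime)
    show "holds D I R e (prime (conjs (a @ b)))"
      using pa pb by (simp add: holds_prime c)
  qed
  have 3: "entails (conjs (a @ b)) (Neg \<beta>)"
    unfolding entails_iff c
  proof (intro allI impI)
    fix D I R e
    assume "is_structure D I" "range e \<subseteq> D" "holds D I R e (conjs a) \<and> holds D I R e (conjs b)"
    then show "holds D I R e (Neg \<beta>)"
      using a(6) b(6) unfolding entails_iff by fastforce
  qed
  show ?case using a b 1 2 3 by (intro exI[of _ "a @ b"]) auto
qed

lemma valid_neg_entails: "valid (Neg a) \<Longrightarrow> entails a b"
  by (auto simp: entails_iff valid_def)

lemma valid_neg_entails2: "valid (Neg t) \<Longrightarrow> entails (Conj a t) b"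
  by (auto simp: entails_iff valid_def)

lemma valid_neg_conj: "valid (Neg a) \<Longrightarrow> valid (Neg (Conj a b))"
  by (auto simp: valid_def)

lemma conjs_Cons: "ys \<noteq> [] \<Longrightarrow> conjs (y # ys) = Conj y (conjs ys)"
  by (cases ys) auto

lemma up:
  assumes "ys \<noteq> []" "set ys \<subseteq> P" "P \<subseteq> cfm V" "valid (Neg \<iota>)" "valid (Neg \<tau>)"
    "safety_problem V (\<iota>, \<tau>, \<beta>)" "entails (conjs ys) (Neg \<beta>)"
  shows "derives V True P (\<iota>, \<tau>, \<beta>) (length ys)"
  using assms
proof (induction ys arbitrary: \<iota> \<tau> \<beta>)
  case Nil
  then show ?case by simp
next
  case (Cons y ys)
  have yc: "y \<in> cfm V" using Cons.prems by auto
  have i1: "derives V True P (\<iota>, \<tau>, Neg y) 1"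
    apply (rule derives.Ind)
    using Cons.prems yc by (auto simp: safety_problem_def valid_neg_entails valid_neg_entails2 cfm_def closed_def)
  show ?case
  proof (cases "ys = []")
    case True
    then show ?thesis using derives.Cons[OF Cons.prems(6) yc i1] Cons.prems(7) by simp
  next
    case False
    have ih: "derives V True P (Conj \<iota> y, Conj \<tau> (Conj (unp y) (prime y)), Conj \<beta> y) (length ys)"
    proof (rule Cons.IH)
      show "entails (conjs ys) (Neg (Conj \<beta> y))"
        using Cons.prems(7) False by (auto simp: entails_iff conjs_Cons)
      show "safety_problem V (Conj \<iota> y, Conj \<tau> (Conj (unp y) (prime y)), Conj \<beta> y)"
        using Cons.prems(6) yc unp_cfm[OF yc] prime_cfm[OF yc]
        by (auto simp: safety_problem_def cfm_def closed_def)
    qed (use Cons.prems False valid_neg_conj in auto)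
    show ?thesis using derives.Inc[OF _ Cons.prems(6) yc i1 ih] by simp
  qed
qed

lemma part1:
  assumes "P \<subseteq> cfm V" "safety_problem V \<Pi>" "provable_FI_n V P n \<Pi>"
  shows "provable_F V (conj_class n P) \<Pi>"
proof -
  obtain \<iota> \<tau> \<beta> where pi: "\<Pi> = (\<iota>, \<tau>, \<beta>)" by (cases \<Pi>) auto
  obtain k where k: "k \<le> n" "derives V True P \<Pi> k" using assms(3) provable_FI_n_def by blast
  obtain xs where xs: "xs \<noteq> []" "length xs \<le> k" "set xs \<subseteq> P" "entails \<iota> (conjs xs)"
     "entails (Conj (unp (conjs xs)) \<tau>) (prime (conjs xs))"
     "entails (conjs xs) (Neg \<beta>)" using inv[OF k(2)] pi by auto
  have c: "conjs xs \<in> cfm V" using conjs_cfm xs assms(1) by blast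
  have cc: "conjs xs \<in> conj_class n P" using xs k unfolding conj_class_def by auto
  have "derives V False (conj_class n P) (\<iota>, \<tau>, Neg (conjs xs)) 1"
    apply (rule derives.Ind)
    using assms(2) pi c cc xs by (auto simp: safety_problem_def cfm_def closed_def)
  then have "derives V False (conj_class n P) (\<iota>, \<tau>, \<beta>) 1"
    using derives.Cons assms(2) pi c xs(6) by metis
  then show ?thesis using pi provable_F_def by blast
qed

definition V0 :: "nat \<Rightarrow> (nat, nat) vocab" where
  "V0 n = \<lparr> fsyms = {}, rsyms = {..<n}, farity = (\<lambda>_. 0), rarity = (\<lambda>_. 0) \<rparr>"

definition P0 :: "nat \<Rightarrow> (nat, nat) fm set" where
  "P0 n = (\<lambda>i. Atom i []) ` {..<n}"

definition ps0 :: "nat \<Rightarrow> (nat, nat) fm list" where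
  "ps0 n = map (\<lambda>i. Atom i []) [0..<n]"

lemma P0_cfm: "P0 n \<subseteq> cfm (V0 n)"
  by (auto simp: P0_def V0_def cfm_def closed_def)

lemma ps0_set: "set (ps0 n) = P0 n"
  by (auto simp: P0_def ps0_def)

lemma part2:
  assumes "n > 0"
  shows "safety_problem (V0 n) (Bot, Bot, Neg (conjs (ps0 n))) \<and>
    provable_FI_n (V0 n) (P0 n) n (Bot, Bot, Neg (conjs (ps0 n))) \<and>
    \<not> provable_FI_n (V0 n) (P0 n) (n - 1) (Bot, Bot, Neg (conjs (ps0 n)))"
proof (intro conjI)
  have ne: "ps0 n \<noteq> []" using assms by (simp add: ps0_def)
  have cc: "conjs (ps0 n) \<in> cfm (V0 n)" using conjs_cfm[OF ne] ps0_set P0_cfm by metis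
  show sp: "safety_problem (V0 n) (Bot, Bot, Neg (conjs (ps0 n)))"
    using cc by (auto simp: safety_problem_def cfm_def closed_def)
  have "derives (V0 n) True (P0 n) (Bot, Bot, Neg (conjs (ps0 n))) (length (ps0 n))"
    by (rule up[OF ne]) (auto simp: ps0_set P0_cfm sp valid_def entails_iff)
  then show "provable_FI_n (V0 n) (P0 n) n (Bot, Bot, Neg (conjs (ps0 n)))"
    by (auto simp: provable_FI_n_def ps0_def)
  show "\<not> provable_FI_n (V0 n) (P0 n) (n - 1) (Bot, Bot, Neg (conjs (ps0 n)))"
  proof
    assume "provable_FI_n (V0 n) (P0 n) (n - 1) (Bot, Bot, Neg (conjs (ps0 n)))"
    then obtain k where k: "k \<le> n - 1" "derives (V0 n) True (P0 n) (Bot, Bot, Neg (conjs (ps0 n))) k"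
      by (auto simp: provable_FI_n_def)
    obtain xs where xs: "xs \<noteq> []" "length xs \<le> k" "set xs \<subseteq> P0 n"
      "entails (conjs xs) (Neg (Neg (conjs (ps0 n))))" using inv[OF k(2)] by auto
    have cP: "card (P0 n) = n"
      using card_image[of "\<lambda>i. Atom i []" "{..<n}"] by (auto simp: P0_def inj_on_def)
    have "card (set xs) < card (P0 n)"
      unfolding cP using card_length[of xs] xs(2) k(1) assms by linarith
    then have "\<not> P0 n \<subseteq> set xs" using card_mono[of "set xs" "P0 n"] by fastforce
    then obtain j where j: "j < n" "Atom j [] \<notin> set xs" by (auto simp: P0_def)
    let ?R = "\<lambda>(i::nat) (_::nat list). i \<noteq> j"
    let ?I = "\<lambda>(_::nat) (_::nat list). (0::nat)"
    have s: "is_structure {0} ?I" by (simp add: is_structure_def)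
    have "holds {0} ?I ?R (\<lambda>_. 0) (conjs xs)"
      using xs(1,3) j(2) by (auto simp: holds_conjs P0_def)
    moreover have "\<not> holds {0} ?I ?R (\<lambda>_. 0) (conjs (ps0 n))"
      using ne j(1) by (auto simp: holds_conjs ps0_def)
    ultimately show False using xs(4) s unfolding entails_iff by fastforce
  qed
qed

theorem theorem4p7:
  shows "(\<forall>(V :: ('f, 'r) vocab) P n \<Pi>.
            P \<subseteq> cfm V \<longrightarrow> safety_problem V \<Pi> \<longrightarrow> provable_FI_n V P n \<Pi>
              \<longrightarrow> provable_F V (conj_class n P) \<Pi>)
       \<and> (\<forall>n > 0. \<exists>(V :: (nat, nat) vocab) P \<Pi>.
            P \<subseteq> cfm V \<and> safety_problem V \<Pi> \<and>
            provable_FI_n V P n \<Pi> \<and> \<not> provable_FI_n V P (n - 1) \<Pi>)"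
proof (intro conjI allI impI)
  fix V :: "('f, 'r) vocab" and P n \<Pi>
  assume "P \<subseteq> cfm V" "safety_problem V \<Pi>" "provable_FI_n V P n \<Pi>"
  then show "provable_F V (conj_class n P) \<Pi>" by (rule part1)
next
  fix n :: nat assume "n > 0"
  then show "\<exists>(V :: (nat, nat) vocab) P \<Pi>.
            P \<subseteq> cfm V \<and> safety_problem V \<Pi> \<and>
            provable_FI_n V P n \<Pi> \<and> \<not> provable_FI_n V P (n - 1) \<Pi>"
    using part2 P0_cfm by blast
qed

end
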